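(* Let $\delta\in(0,1]$, $\varepsilon\in(0,1/2]$, $c=4\ln(1/\varepsilon)$, $t=\lceil\log_c(2m)\rceil$, and for $j\in[t]$ let $P_j=\{(k,d):k\in[2m],\,d\in[c^{j-1},c^j)\}$, where a pair $(k,d)$ is identified with the set $\{k,k+d\}$. There is a constant $\gamma=\gamma(\delta,\varepsilon)\in(0,1]$ such that for every $(2,\delta,\varepsilon)$ insdel LDC $C:\{0,1\}^n\to\{0,1\}^m$ with a non-adaptive decoder and $m$ sufficiently large (depending on $\delta,\varepsilon$), and every $i\in[n]$, there exists $j\in[t]$ with $|P_j\cap\mathrm{Good}_i|\ge\gamma mc^j$.
   Context: $C$ is a $(q,\delta,\varepsilon)$ insdel LDC if a randomized $\mathrm{Dec}$, given oracle access to $y\in\{0,1\}^{m'}$, $m'$ and $i\in[n]$, reads at most $q$ symbols and satisfies $\Pr[\mathrm{Dec}(y,m',i)=x_i]\ge1/2+\varepsilon$ whenever $\mathrm{ED}(C(x),y)\le2\delta m$, where $\mathrm{ED}$ is insertion/deletion distance; non-adaptive means its query distribution does not depend on $y$. For $x\in\{0,1\}^n$, $C'(x)\in\{0,1\}^{2m}$ is $C(x)$ followed by $m$ independent uniform random bits. $\mathrm{Good}_i$ is the set of $Q\in\binom{[2m]}{q}$ (here $q=2$) such that some $f:\{0,1\}^q\to\{0,1\}$ has $\Pr[f(C'(x)_Q)=x_i]\ge1/2+\varepsilon/4$, over uniform $x$ and the padded bits. *)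

theory Defs
  imports "HOL-Probability.Probability"
begin

definition insdel_step :: "('a list \<times> 'a list) set" where
  "insdel_step = {(u, v). \<exists>a b c. (v = a @ [c] @ b \<and> u = a @ b) \<or> (u = a @ [c] @ b \<and> v = a @ b)}"

definition ED :: "'a list \<Rightarrow> 'a list \<Rightarrow> nat" where
  "ED u v = (LEAST k. (u, v) \<in> insdel_step ^^ k)"

text \<open>A non-adaptive randomized decoder: for every received length m' and index i,
  a probability distribution over pairs (Q, f), where Q is the list of queried
  positions (independent of the received word) and f computes the output from the
  queried symbols.\<close>
type_synonym decoder = "nat \<Rightarrow> nat \<Rightarrow> (nat list \<times> (bool list \<Rightarrow> bool)) pmf"

definition dec_success_prob :: "decoder \<Rightarrow> bool list \<Rightarrow> nat \<Rightarrow> bool \<Rightarrow> real" where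
  "dec_success_prob Dec y i b =
     measure_pmf.prob (Dec (length y) i) {(Q, f). f (map (\<lambda>j. y ! j) Q) = b}"

definition reads_at_most :: "nat \<Rightarrow> decoder \<Rightarrow> bool" where
  "reads_at_most q Dec \<longleftrightarrow>
     (\<forall>m' i Q f. (Q, f) \<in> set_pmf (Dec m' i) \<longrightarrow> length Q \<le> q \<and> (\<forall>j\<in>set Q. j < m'))"

text \<open>C : {0,1}^n \<rightarrow> {0,1}^m is a (q,\<delta>,\<epsilon>) insdel LDC with the non-adaptive decoder Dec
  (indices i \<in> [n] are 0-based: i < n).\<close>
definition insdel_LDC_nonadaptive ::
  "nat \<Rightarrow> real \<Rightarrow> real \<Rightarrow> nat \<Rightarrow> nat \<Rightarrow> (bool list \<Rightarrow> bool list) \<Rightarrow> decoder \<Rightarrow> bool" where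
  "insdel_LDC_nonadaptive q \<delta> \<epsilon> n m C Dec \<longleftrightarrow>
     (\<forall>x. length x = n \<longrightarrow> length (C x) = m) \<and>
     reads_at_most q Dec \<and>
     (\<forall>x y i. length x = n \<longrightarrow> i < n \<longrightarrow> real (ED (C x) y) \<le> 2 * \<delta> * real m \<longrightarrow>
        dec_success_prob Dec y i (x ! i) \<ge> 1/2 + \<epsilon>)"

definition padded :: "(bool list \<Rightarrow> bool list) \<Rightarrow> bool list \<Rightarrow> bool list \<Rightarrow> bool list" where
  "padded C x r = C x @ r"

definition restrict_word :: "bool list \<Rightarrow> nat set \<Rightarrow> bool list" where
  "restrict_word w Q = map (\<lambda>j. w ! j) (sorted_list_of_set Q)"

text \<open>Positions are 0-based: [2m] = {0..<2m}.  Probability over uniform x \<in> {0,1}^n and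
  uniform padding r \<in> {0,1}^m.\<close>
definition Good :: "nat \<Rightarrow> real \<Rightarrow> nat \<Rightarrow> nat \<Rightarrow> (bool list \<Rightarrow> bool list) \<Rightarrow> nat \<Rightarrow> nat set set" where
  "Good q \<epsilon> n m C i =
     {Q. Q \<subseteq> {0..<2*m} \<and> card Q = q \<and>
        (\<exists>f :: bool list \<Rightarrow> bool.
           measure_pmf.prob (pmf_of_set {(x, r). length x = n \<and> length r = m})
             {(x, r). f (restrict_word (padded C x r) Q) = x ! i} \<ge> 1/2 + \<epsilon>/4)}"

definition Pj :: "real \<Rightarrow> nat \<Rightarrow> nat \<Rightarrow> (nat \<times> nat) set" where
  "Pj c m j = {(k, d). k < 2*m \<and> c ^ (j - 1) \<le> real d \<and> real d < c ^ j}"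

definition Pj_good_count :: "real \<Rightarrow> nat \<Rightarrow> nat \<Rightarrow> nat set set \<Rightarrow> nat" where
  "Pj_good_count c m j G = card {(k, d) \<in> Pj c m j. {k, k + d} \<in> G}"

end

theory Submission
  imports Defs "HOL-Library.Sublist"
begin


lemma step_del: "(b # ys, ys) \<in> insdel_step"
  unfolding insdel_step_def
  by (simp, rule exI[of _ "[]"], rule exI[of _ ys], rule exI[of _ b], simp)

lemma step_ins_end: "(w, w @ [c]) \<in> insdel_step"
  unfolding insdel_step_def
  by (simp, rule exI[of _ w], rule exI[of _ "[]"], rule exI[of _ c], simp)

lemma step_cons: "(u, v) \<in> insdel_step \<Longrightarrow> (a # u, a # v) \<in> insdel_step"
  unfolding insdel_step_def
  by (auto, (metis append_Cons)+)

lemma relpow_cons: "(u, v) \<in> insdel_step ^^ k \<Longrightarrow> (a # u, a # v) \<in> insdel_step ^^ k"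
proof (induction k arbitrary: v)
  case 0 then show ?case by simp
next
  case (Suc k)
  then obtain w where "(u, w) \<in> insdel_step ^^ k" "(w, v) \<in> insdel_step" by auto
  then show ?case using Suc.IH step_cons by (meson relpow_Suc_I)
qed

lemma subseq_path: "subseq xs ys \<Longrightarrow> (ys, xs) \<in> insdel_step ^^ (length ys - length xs)"
proof (induction rule: list_emb.induct)
  case (list_emb_Nil ys)
  then show ?case
  proof (induction ys)
    case Nil then show ?case by simp
  next
    case (Cons a ys)
    then have "(ys, []) \<in> insdel_step ^^ length ys" by simp
    then have "(a # ys, []) \<in> insdel_step ^^ Suc (length ys)"
      using step_del[of a ys] by (rule relpow_Suc_I2[rotated])
    then show ?case by simp
  qed
next
  case (list_emb_Cons xs ys y)
  then have le: "length xs \<le> length ys" using list_emb_length by blast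
  have "(y # ys, xs) \<in> insdel_step ^^ Suc (length ys - length xs)"
    using list_emb_Cons.IH step_del[of y ys] by (meson relpow_Suc_I2)
  then show ?case using le by (simp add: Suc_diff_le)
next
  case (list_emb_Cons2 x y xs ys)
  then show ?case using relpow_cons[of ys xs "length ys - length xs" x] by simp
qed

lemma append_path: "(w, w @ z) \<in> insdel_step ^^ length z"
proof (induction z rule: rev_induct)
  case Nil then show ?case by simp
next
  case (snoc c z)
  then have "(w, w @ z @ [c]) \<in> insdel_step ^^ Suc (length z)"
    using step_ins_end[of "w @ z" c] by (metis append_assoc relpow_Suc_I)
  then show ?case by simp
qed

lemma ED_le: "(u, v) \<in> insdel_step ^^ k \<Longrightarrow> ED u v \<le> k"
  unfolding ED_def by (rule Least_le)

lemma map_subseq: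
  assumes "\<And>q. q + 1 < k \<Longrightarrow> \<phi> q < \<phi> (q+1)" "\<And>q. q < k \<Longrightarrow> \<phi> q < length xs"
  shows "subseq (map (\<lambda>q. xs ! \<phi> q) [0..<k]) xs"
  using assms
proof (induction xs arbitrary: \<phi> k)
  case Nil
  then show ?case by (cases k) auto
next
  case (Cons x xs)
  show ?case
  proof (cases k)
    case 0 then show ?thesis by simp
  next
    case (Suc k')
    have mono: "\<phi> p < \<phi> q" if "p < q" "q < k" for p q
      using that
    proof (induction q)
      case 0 then show ?case by simp
    next
      case (Suc q)
      then show ?case using Cons.prems(1)[of q] by (cases "p = q") auto
    qed
    show ?thesis
    proof (cases "\<phi> 0 = 0")
      case True
      define \<psi> where "\<psi> q = \<phi> (Suc q) - 1" for q
      have pos: "\<phi> (Suc q) > 0" if "Suc q < k" for q using mono[of 0 "Suc q"] that by simp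
      have "subseq (map (\<lambda>q. xs ! \<psi> q) [0..<k']) xs"
      proof (rule Cons.IH)
        fix q assume "q + 1 < k'"
        then show "\<psi> q < \<psi> (q+1)" using mono[of "Suc q" "Suc (Suc q)"] Suc pos[of q] unfolding \<psi>_def by simp
      next
        fix q assume "q < k'"
        then show "\<psi> q < length xs" using Cons.prems(2)[of "Suc q"] Suc pos[of q] unfolding \<psi>_def by simp
      qed
      moreover have "map (\<lambda>q. (x # xs) ! \<phi> q) [0..<k] = x # map (\<lambda>q. xs ! \<psi> q) [0..<k']"
        unfolding Suc \<psi>_def using True pos Suc
        by (simp add: map_upt_Suc del: upt_Suc)
      ultimately show ?thesis by simp
    next
      case False
      define \<psi> where "\<psi> q = \<phi> q - 1" for q
      have pos: "\<phi> q > 0" if "q < k" for q using mono[of 0 q] that False by (cases q) auto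
      have "subseq (map (\<lambda>q. xs ! \<psi> q) [0..<k]) xs"
      proof (rule Cons.IH)
        fix q assume "q + 1 < k"
        then show "\<psi> q < \<psi> (q+1)" using Cons.prems(1)[of q] pos[of q] unfolding \<psi>_def by simp
      next
        fix q assume "q < k"
        then show "\<psi> q < length xs" using Cons.prems(2)[of q] pos[of q] unfolding \<psi>_def by simp
      qed
      moreover have "map (\<lambda>q. (x # xs) ! \<phi> q) [0..<k] = map (\<lambda>q. xs ! \<psi> q) [0..<k]"
        unfolding \<psi>_def using pos by (intro map_cong) (auto simp: nth_Cons' dest: pos)
      ultimately show ?thesis by (metis list_emb_Cons)
    qed
  qed
qed



definition phi :: "nat \<Rightarrow> nat \<Rightarrow> nat \<Rightarrow> nat \<Rightarrow> nat" where
  "phi m s u q = q + s + q * u div m"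

lemma phi_Suc: "phi m s u q < phi m s u (Suc q)"
proof -
  have "q * u div m \<le> Suc q * u div m" by (rule div_le_mono) simp
  then show ?thesis unfolding phi_def by simp
qed

lemma phi_strict: "p < q \<Longrightarrow> phi m s u p < phi m s u q"
proof (induction q)
  case 0 then show ?case by simp
next
  case (Suc q) then show ?case using phi_Suc[of m s u q] by (cases "p = q") auto
qed

lemma phi_le: "q \<le> m \<Longrightarrow> phi m s u q \<le> q + s + u"
proof -
  assume "q \<le> m"
  then have "q * u \<le> m * u" by simp
  then have "q * u div m \<le> m * u div m" by (rule div_le_mono)
  also have "\<dots> \<le> u" by (cases "m = 0") auto
  finally show ?thesis unfolding phi_def by simp
qed

lemma ED_window:
  assumes "length cx = m" "length r = m" "s + u \<le> m"
  shows "ED cx (map (\<lambda>q. (cx @ r) ! phi m s u q) [0..<m]) \<le> 2 * (s + u)"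
proof -
  define q0 where "q0 = m - (s + u)"
  have lt: "phi m s u q < m" if "q < q0" for q
    using phi_le[of q m s u] that assms unfolding q0_def by linarith
  define w where "w = map (\<lambda>q. cx ! phi m s u q) [0..<q0]"
  define z where "z = map (\<lambda>q. (cx @ r) ! phi m s u q) [q0..<m]"
  have split: "map (\<lambda>q. (cx @ r) ! phi m s u q) [0..<m] = w @ z"
  proof -
    have "[0..<m] = [0..<q0] @ [q0..<m]" using upt_add_eq_append[of 0 q0 "m - q0"] unfolding q0_def by simp
    moreover have "map (\<lambda>q. (cx @ r) ! phi m s u q) [0..<q0] = w"
      unfolding w_def using lt assms(1) by (auto simp: nth_append)
    ultimately show ?thesis unfolding z_def by simp
  qed
  have "subseq w cx" unfolding w_def
    by (rule map_subseq) (use phi_Suc lt assms(1) in simp_all)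
  then have p1: "(cx, w) \<in> insdel_step ^^ (s + u)"
    using subseq_path[of w cx] assms unfolding w_def q0_def by simp
  have p2: "(w, w @ z) \<in> insdel_step ^^ (s + u)"
    using append_path[of w z] assms unfolding z_def q0_def by simp
  have "(cx, w @ z) \<in> insdel_step ^^ ((s + u) + (s + u))"
    using p1 p2 relpow_add[of "s + u" "s + u" insdel_step] by blast
  then show ?thesis using ED_le unfolding split by fastforce
qed



lemma fiber_card:
  assumes ab: "a < b" and m: "0 < m"
  shows "real (card {u. u < S \<and> b*u div m - a*u div m = v}) \<le> 2 * real m / real (b - a) + 1"
proof -
  define A where "A = {u. u < S \<and> b*u div m - a*u div m = v}"
  define d where "d = b - a"
  have d0: "0 < d" using ab unfolding d_def by simp
  have key: "d * u < m * v + m \<and> m * v < d * u + m" if "u \<in> A" for u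
  proof -
    define P where "P = b * u"
    define Q where "Q = a * u"
    have QP: "Q \<le> P" unfolding P_def Q_def using ab by simp
    have dv: "P div m - Q div m = v" using that unfolding A_def P_def Q_def by simp
    have qp: "Q div m \<le> P div m" using QP by (rule div_le_mono)
    have e1: "P = m * (P div m) + P mod m" by simp
    have e2: "Q = m * (Q div m) + Q mod m" by simp
    have l1: "P mod m < m" "Q mod m < m" using m by simp_all
    have du: "d * u = P - Q" unfolding d_def P_def Q_def by (simp add: diff_mult_distrib)
    have mv: "m * v = m * (P div m) - m * (Q div m)" using dv by (metis diff_mult_distrib2)
    have "m * (Q div m) \<le> m * (P div m)" using qp by simp
    then show ?thesis using du mv e1 e2 l1 QP by linarith
  qed
  show ?thesis
  proof (cases "A = {}")
    case True then show ?thesis unfolding A_def[symmetric] by simp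
  next
    case False
    have finA: "finite A" unfolding A_def by simp
    define u1 where "u1 = Min A"
    have u1A: "u1 \<in> A" unfolding u1_def using finA False by simp
    define K where "K = 2 * m div d + 1"
    have sub: "A \<subseteq> {u1..<u1 + K}"
    proof
      fix u assume uA: "u \<in> A"
      have "u1 \<le> u" unfolding u1_def using finA uA by simp
      moreover have "d * u < d * u1 + 2 * m" using key[OF uA] key[OF u1A] by linarith
      ultimately have "d * (u - u1) < 2 * m" by (simp add: diff_mult_distrib2 less_diff_conv2)
      then have "d * (u - u1) div d \<le> 2 * m div d" by (intro div_le_mono) simp
      then have "u - u1 \<le> 2 * m div d" using d0 by simp
      then show "u \<in> {u1..<u1 + K}" unfolding K_def using \<open>u1 \<le> u\<close> by simp
    qed
    have "card A \<le> K" using card_mono[OF _ sub] by simp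
    then have "real (card A) \<le> real (2 * m div d) + 1" unfolding K_def by simp
    also have "real (2 * m div d) \<le> real (2 * m) / real d" by (rule of_nat_div_le_of_nat)
    finally show ?thesis unfolding A_def d_def by simp
  qed
qed

lemma scale_exists:
  fixes c x :: real
  assumes "1 < c" "1 \<le> x"
  shows "\<exists>j\<ge>1. c ^ (j - 1) \<le> x \<and> x < c ^ j"
proof -
  obtain N where "x < c ^ N" using real_arch_pow[OF assms(1)] by blast
  define j where "j = (LEAST j. x < c ^ j)"
  have xj: "x < c ^ j" unfolding j_def using \<open>x < c ^ N\<close> by (rule LeastI)
  have j1: "j \<ge> 1" using xj assms by (cases j) auto
  have "\<not> x < c ^ (j - 1)" unfolding j_def
    by (rule not_less_Least) (use j1 j_def in simp)
  then show ?thesis using xj j1 by (intro exI[of _ j]) auto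
qed

lemma scale_compare:
  fixes c d g :: real
  assumes c: "2 < c" and j0: "c ^ (j0 - 1) \<le> d" "d < c ^ j0" "1 \<le> j0"
    and jg: "c ^ (jg - 1) \<le> g" "g < c ^ jg" and dg: "d \<le> g" "g \<le> 2 * d"
  shows "j0 \<le> jg \<and> jg \<le> j0 + 1"
proof
  show "j0 \<le> jg"
  proof (rule ccontr)
    assume "\<not> j0 \<le> jg"
    then have "jg \<le> j0 - 1" by simp
    then have "c ^ jg \<le> c ^ (j0 - 1)" using c by (intro power_increasing) auto
    then show False using j0 jg dg by linarith
  qed
next
  show "jg \<le> j0 + 1"
  proof (rule ccontr)
    assume "\<not> jg \<le> j0 + 1"
    then have "Suc j0 \<le> jg - 1" by simp
    then have "c ^ Suc j0 \<le> c ^ (jg - 1)" using c by (intro power_increasing) auto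
    moreover have "c ^ Suc j0 = c * c ^ j0" by simp
    moreover have "d \<ge> 0" using j0 c by (smt (verit) zero_le_power)
    moreover have "2 * c ^ j0 < c * c ^ j0" using c by (simp add: mult_strict_right_mono)
    ultimately show False using j0 jg dg by linarith
  qed
qed

lemma scale_range:
  fixes c :: real
  assumes c: "1 < c" and j: "1 \<le> j" "c ^ (j - 1) < 2 * real m"
  shows "j \<le> nat \<lceil>log c (2 * real m)\<rceil>"
proof -
  have pos: "0 < 2 * real m" using j c by (smt (verit) zero_le_power)
  have "c powr real (j - 1) < 2 * real m" using j c by (subst powr_realpow) auto
  then have "real (j - 1) < log c (2 * real m)" using less_log_iff[OF c pos] by simp
  then have "real j - 1 < log c (2 * real m)" using j by simp
  then have "real_of_int (int j - 1) < log c (2 * real m)" by simp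
  then have "int j - 1 < \<lceil>log c (2 * real m)\<rceil>" by (meson le_of_int_ceiling less_le_trans of_int_less_iff)
  then show ?thesis by linarith
qed



lemma core:
  fixes \<delta> \<epsilon> c \<gamma> :: real and n m i :: nat and C :: "bool list \<Rightarrow> bool list" and Dec :: decoder
  assumes \<delta>: "0 < \<delta>" "\<delta> \<le> 1" and \<epsilon>: "0 < \<epsilon>" "\<epsilon> \<le> 1/2" and c: "2 < c"
    and \<gamma>: "\<gamma> = \<epsilon> * \<delta>^2 / (1000 * c^2)"
    and mbig: "16 \<le> \<delta> * real m"
    and LDC: "insdel_LDC_nonadaptive 2 \<delta> \<epsilon> n m C Dec" and i: "i < n"
    and small: "\<forall>j\<in>{1..nat \<lceil>log c (2 * real m)\<rceil>}.
        real (Pj_good_count c m j (Good 2 \<epsilon> n m C i)) < \<gamma> * real m * c ^ j"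
  shows False
proof -
  have dm: "\<delta> * real m \<le> real m" using \<delta> by (simp add: mult_left_le_one_le)
  have m16: "16 \<le> real m" using mbig dm by linarith
  then have m0: "0 < m" by simp
  define S where "S = nat \<lfloor>\<delta> * real m / 4\<rfloor>"
  have S_lo: "\<delta> * real m / 8 \<le> real S" unfolding S_def using mbig by linarith
  have S_hi: "real S \<le> \<delta> * real m / 4" unfolding S_def using mbig by linarith
  have S4: "4 * S \<le> m"
  proof -
    have "real (4 * S) \<le> real m" using S_hi dm by simp
    then show ?thesis by linarith
  qed
  define \<Theta> where "\<Theta> = {..<S} \<times> {..<S}"
  have fin\<Theta>: "finite \<Theta>" unfolding \<Theta>_def by simp
  have card\<Theta>: "card \<Theta> = S * S" unfolding \<Theta>_def by (simp add: card_cartesian_product)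
  have S0: "0 < S" using S_lo \<delta> mbig by linarith
  define \<Omega> where "\<Omega> = {(x::bool list, r::bool list). length x = n \<and> length r = m}"
  have \<Omega>eq: "\<Omega> = {x. set x \<subseteq> UNIV \<and> length x = n} \<times> {r. set r \<subseteq> UNIV \<and> length r = m}"
    unfolding \<Omega>_def by auto
  have fin\<Omega>: "finite \<Omega>" unfolding \<Omega>eq by (intro finite_cartesian_product finite_lists_length_eq) auto
  have "(replicate n False, replicate m False) \<in> \<Omega>" unfolding \<Omega>_def by simp
  then have ne\<Omega>: "\<Omega> \<noteq> {}" by blast
  define D where "D = Dec m i"
  define t where "t = 1/2 + \<epsilon>/4"
  define Sc where "Sc \<theta> \<omega> = measure_pmf.prob (pmf_of_set \<Omega>)
     {(x, r). snd \<omega> (map (\<lambda>q. (C x @ r) ! phi m (fst \<theta>) (snd \<theta>) q) (fst \<omega>)) = x ! i}" for \<theta> \<omega>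
  have lenC: "\<And>x. length x = n \<Longrightarrow> length (C x) = m"
    and reads: "reads_at_most 2 Dec"
    and succ: "\<And>x y. length x = n \<Longrightarrow> real (ED (C x) y) \<le> 2 * \<delta> * real m \<Longrightarrow>
        dec_success_prob Dec y i (x ! i) \<ge> 1/2 + \<epsilon>"
    using LDC i unfolding insdel_LDC_nonadaptive_def by auto
  have supp: "length Q \<le> 2 \<and> (\<forall>q\<in>set Q. q < m)" if "(Q, f) \<in> set_pmf D" for Q f
    using reads that unfolding reads_at_most_def D_def by blast
  have Sc_bd: "0 \<le> Sc \<theta> \<omega> \<and> Sc \<theta> \<omega> \<le> 1" for \<theta> \<omega> unfolding Sc_def by simp
  have int_Sc: "integrable D (Sc \<theta>)" for \<theta>
    by (rule measure_pmf.integrable_const_bound[where B=1]) (use Sc_bd in auto)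

  have step1: "1/2 + \<epsilon> \<le> integral\<^sup>L D (Sc \<theta>)" if "\<theta> \<in> \<Theta>" for \<theta>
  proof -
    obtain s u where \<theta>: "\<theta> = (s, u)" "s < S" "u < S" using \<open>\<theta> \<in> \<Theta>\<close> unfolding \<Theta>_def by auto
    define Ev where "Ev xr = {\<omega>. snd \<omega> (map (\<lambda>q. (C (fst xr) @ snd xr) ! phi m s u q) (fst \<omega>)) = fst xr ! i}" for xr
    have Sc_eq: "Sc \<theta> \<omega> = (\<Sum>xr\<in>\<Omega>. indicator (Ev xr) \<omega>) / real (card \<Omega>)" for \<omega>
    proof -
      have "Sc \<theta> \<omega> = real (card (\<Omega> \<inter> {xr. \<omega> \<in> Ev xr})) / real (card \<Omega>)"
        unfolding Sc_def \<theta> Ev_def measure_pmf_of_set[OF ne\<Omega> fin\<Omega>]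
        by (simp add: split_def)
      also have "real (card (\<Omega> \<inter> {xr. \<omega> \<in> Ev xr})) = (\<Sum>xr\<in>\<Omega>. indicator (Ev xr) \<omega>)"
        by (simp add: indicator_def sum.If_cases fin\<Omega> Collect_conj_eq Int_commute)
      finally show ?thesis .
    qed
    have int_ind: "integrable D (indicator (Ev xr) :: _ \<Rightarrow> real)" for xr
      by (rule measure_pmf.integrable_const_bound[where B=1]) auto
    have "integral\<^sup>L D (Sc \<theta>) = integral\<^sup>L D (\<lambda>\<omega>. \<Sum>xr\<in>\<Omega>. indicator (Ev xr) \<omega>) / real (card \<Omega>)"
      unfolding Sc_eq by simp
    also have "integral\<^sup>L D (\<lambda>\<omega>. \<Sum>xr\<in>\<Omega>. indicator (Ev xr) \<omega>) = (\<Sum>xr\<in>\<Omega>. measure_pmf.prob D (Ev xr))"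
      using Bochner_Integration.integral_sum[where M="measure_pmf D" and I=\<Omega> and f="\<lambda>xr. indicator (Ev xr)"] int_ind
      by simp
    finally have eqI: "integral\<^sup>L D (Sc \<theta>) = (\<Sum>xr\<in>\<Omega>. measure_pmf.prob D (Ev xr)) / real (card \<Omega>)" .
    have each: "1/2 + \<epsilon> \<le> measure_pmf.prob D (Ev xr)" if "xr \<in> \<Omega>" for xr
    proof -
      obtain x r where xr: "xr = (x, r)" "length x = n" "length r = m" using \<open>xr \<in> \<Omega>\<close> unfolding \<Omega>_def by auto
      define y where "y = map (\<lambda>q. (C x @ r) ! phi m s u q) [0..<m]"
      have leny: "length y = m" unfolding y_def by simp
      have "s + u \<le> m" using \<theta> S4 by linarith
      then have "ED (C x) y \<le> 2 * (s + u)" unfolding y_def using ED_window lenC xr by blast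
      moreover have "real (2 * (s + u)) \<le> 2 * \<delta> * real m" using \<theta> S_hi by simp
      ultimately have "real (ED (C x) y) \<le> 2 * \<delta> * real m" by linarith
      then have "1/2 + \<epsilon> \<le> dec_success_prob Dec y i (x ! i)" using succ xr by blast
      also have "dec_success_prob Dec y i (x ! i) = measure_pmf.prob D {(Q, f). f (map (\<lambda>j. y ! j) Q) = x ! i}"
        unfolding dec_success_prob_def leny D_def ..
      also have "\<dots> = measure_pmf.prob D (Ev xr)"
      proof (rule measure_prob_cong_0)
        have agree: "\<omega> \<in> {(Q, f). f (map (\<lambda>j. y ! j) Q) = x ! i} \<longleftrightarrow> \<omega> \<in> Ev xr"
          if "\<omega> \<in> set_pmf D" for \<omega>
        proof -
          obtain Q f where \<omega>: "\<omega> = (Q, f)" by (cases \<omega>)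
          have "\<forall>q\<in>set Q. q < m" using supp that \<omega> by blast
          then have "map (\<lambda>j. y ! j) Q = map (\<lambda>q. (C x @ r) ! phi m s u q) Q"
            unfolding y_def by (intro map_cong) auto
          then show ?thesis unfolding \<omega> Ev_def xr by (simp del: map_eq_conv)
        qed
        show "pmf D \<omega> = 0" if "\<omega> \<in> {(Q, f). f (map (\<lambda>j. y ! j) Q) = x ! i} - Ev xr" for \<omega>
          using agree[of \<omega>] that by (auto simp: set_pmf_iff)
        show "pmf D \<omega> = 0" if "\<omega> \<in> Ev xr - {(Q, f). f (map (\<lambda>j. y ! j) Q) = x ! i}" for \<omega>
          using agree[of \<omega>] that by (auto simp: set_pmf_iff)
      qed
      finally show ?thesis .
    qed
    have "real (card \<Omega>) * (1/2 + \<epsilon>) = (\<Sum>xr\<in>\<Omega>. 1/2 + \<epsilon>)" by simp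
    also have "\<dots> \<le> (\<Sum>xr\<in>\<Omega>. measure_pmf.prob D (Ev xr))" by (rule sum_mono) (rule each)
    finally have "real (card \<Omega>) * (1/2 + \<epsilon>) \<le> (\<Sum>xr\<in>\<Omega>. measure_pmf.prob D (Ev xr))" .
    moreover have "0 < real (card \<Omega>)" using fin\<Omega> ne\<Omega> by (simp add: card_gt_0_iff)
    ultimately show ?thesis unfolding eqI by (simp add: field_simps)
  qed

  define H where "H \<omega> = card {\<theta>\<in>\<Theta>. t \<le> Sc \<theta> \<omega>}" for \<omega>
  have step2: "real (card \<Theta>) * (1/2 + \<epsilon>) \<le> integral\<^sup>L D (\<lambda>\<omega>. \<Sum>\<theta>\<in>\<Theta>. Sc \<theta> \<omega>)"
  proof -
    have "real (card \<Theta>) * (1/2 + \<epsilon>) = (\<Sum>\<theta>\<in>\<Theta>. 1/2 + \<epsilon>)" by simp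
    also have "\<dots> \<le> (\<Sum>\<theta>\<in>\<Theta>. integral\<^sup>L D (Sc \<theta>))" by (rule sum_mono) (rule step1)
    also have "\<dots> = integral\<^sup>L D (\<lambda>\<omega>. \<Sum>\<theta>\<in>\<Theta>. Sc \<theta> \<omega>)"
      using Bochner_Integration.integral_sum[where M="measure_pmf D" and I=\<Theta> and f=Sc] int_Sc by simp
    finally show ?thesis .
  qed
  have step3: "(\<Sum>\<theta>\<in>\<Theta>. Sc \<theta> \<omega>) \<le> real (H \<omega>) + real (card \<Theta>) * t" for \<omega>
  proof -
    have "(\<Sum>\<theta>\<in>\<Theta>. Sc \<theta> \<omega>) \<le> (\<Sum>\<theta>\<in>\<Theta>. (if t \<le> Sc \<theta> \<omega> then 1 else 0) + t)"
      proof (rule sum_mono) fix \<theta> show "Sc \<theta> \<omega> \<le> (if t \<le> Sc \<theta> \<omega> then 1 else 0) + t" using Sc_bd[of \<theta> \<omega>] t_def \<epsilon> by auto qed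
    also have "\<dots> = real (H \<omega>) + real (card \<Theta>) * t"
      unfolding H_def by (simp add: sum.distrib sum.If_cases fin\<Theta> Collect_conj_eq Int_commute)
    finally show ?thesis .
  qed
  have int_H: "integrable D (\<lambda>\<omega>. real (H \<omega>))"
  proof (rule measure_pmf.integrable_const_bound[where B="real (card \<Theta>)"])
    show "AE x in measure_pmf D. norm (real (H x)) \<le> real (card \<Theta>)"
      unfolding H_def using fin\<Theta> by (auto intro!: card_mono)
  qed simp
  have step4: "real (card \<Theta>) * (3 * \<epsilon> / 4) \<le> integral\<^sup>L D (\<lambda>\<omega>. real (H \<omega>))"
  proof -
    have "integral\<^sup>L D (\<lambda>\<omega>. \<Sum>\<theta>\<in>\<Theta>. Sc \<theta> \<omega>) \<le> integral\<^sup>L D (\<lambda>\<omega>. real (H \<omega>) + real (card \<Theta>) * t)"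
      by (rule integral_mono) (use int_Sc int_H step3 in auto)
    also have "\<dots> = integral\<^sup>L D (\<lambda>\<omega>. real (H \<omega>)) + real (card \<Theta>) * t"
      using int_H by simp
    finally show ?thesis using step2 unfolding t_def by (simp add: algebra_simps)
  qed
  have "\<exists>\<omega>\<in>set_pmf D. real (card \<Theta>) * (\<epsilon> / 2) < real (H \<omega>)"
  proof (rule ccontr)
    assume "\<not> ?thesis"
    then have "AE \<omega> in measure_pmf D. real (H \<omega>) \<le> real (card \<Theta>) * (\<epsilon> / 2)"
      by (auto simp: AE_measure_pmf_iff not_less)
    then have "integral\<^sup>L D (\<lambda>\<omega>. real (H \<omega>)) \<le> integral\<^sup>L D (\<lambda>\<omega>. real (card \<Theta>) * (\<epsilon> / 2))"
      by (intro integral_mono_AE int_H) simp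
    then have "integral\<^sup>L D (\<lambda>\<omega>. real (H \<omega>)) \<le> real (card \<Theta>) * (\<epsilon> / 2)" by simp
    moreover have "0 < real (card \<Theta>)" using card\<Theta> S0 by simp
    moreover have "real (card \<Theta>) * (\<epsilon> / 2) < real (card \<Theta>) * (3 * \<epsilon> / 4)"
      by (rule mult_strict_left_mono) (use \<epsilon> \<open>0 < real (card \<Theta>)\<close> in auto)
    ultimately show False using step4 by linarith
  qed
  then obtain Q f where Qf: "(Q, f) \<in> set_pmf D" and Hbig: "real (card \<Theta>) * (\<epsilon> / 2) < real (H (Q, f))"
    by auto
  have "\<exists>a b. a < b \<and> b \<le> m \<and> set Q \<subseteq> {a, b}"
  proof (cases Q)
    case Nil then show ?thesis using m0 by (intro exI[of _ 0] exI[of _ 1]) auto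
  next
    case (Cons q1 Q')
    have q1: "q1 < m" using supp[OF Qf] Cons by simp
    show ?thesis
    proof (cases Q')
      case Nil then show ?thesis using Cons q1 by (intro exI[of _ q1] exI[of _ "Suc q1"]) auto
    next
      case Cons2: (Cons q2 Q'')
      have q2: "q2 < m" and Q'': "Q'' = []" using supp[OF Qf] Cons Cons2 by auto
      consider "q1 < q2" | "q2 < q1" | "q1 = q2" by linarith
      then show ?thesis
      proof cases
        case 1 then show ?thesis using Cons Cons2 Q'' q2 by (intro exI[of _ q1] exI[of _ q2]) auto
      next
        case 2 then show ?thesis using Cons Cons2 Q'' q1 by (intro exI[of _ q2] exI[of _ q1]) auto
      next
        case 3 then show ?thesis using Cons Cons2 Q'' q1 by (intro exI[of _ q1] exI[of _ "Suc q1"]) auto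
      qed
    qed
  qed
  then obtain a b where ab: "a < b" "b \<le> m" "set Q \<subseteq> {a, b}" by blast
  define A where "A = {\<theta>\<in>\<Theta>. {phi m (fst \<theta>) (snd \<theta>) a, phi m (fst \<theta>) (snd \<theta>) b} \<in> Good 2 \<epsilon> n m C i}"
  have step6: "{\<theta>\<in>\<Theta>. t \<le> Sc \<theta> (Q, f)} \<subseteq> A"
  proof
    fix \<theta> assume "\<theta> \<in> {\<theta>\<in>\<Theta>. t \<le> Sc \<theta> (Q, f)}"
    then obtain s u where \<theta>: "\<theta> = (s, u)" "s < S" "u < S" and tS: "t \<le> Sc \<theta> (Q, f)"
      unfolding \<Theta>_def by auto
    define pa where "pa = phi m s u a"
    define pb where "pb = phi m s u b"
    have papb: "pa < pb" unfolding pa_def pb_def using ab(1) by (rule phi_strict)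
    have "pb \<le> b + s + u" unfolding pb_def using ab by (intro phi_le) auto
    then have pb2: "pb < 2 * m" using ab \<theta> S4 m0 by linarith
    define f' where "f' w = f (map (\<lambda>j. if j = a then w ! 0 else w ! 1) Q)" for w
    have ev: "{(x, r). f' (restrict_word (padded C x r) {pa, pb}) = x ! i} =
        {(x, r). f (map (\<lambda>q. (C x @ r) ! phi m s u q) Q) = x ! i}"
    proof -
      have "f' (restrict_word (padded C x r) {pa, pb}) = f (map (\<lambda>q. (C x @ r) ! phi m s u q) Q)" for x r
      proof -
        have rw: "restrict_word (padded C x r) {pa, pb} = [(C x @ r) ! pa, (C x @ r) ! pb]"
          unfolding restrict_word_def padded_def using papb by simp
        have mq: "map (\<lambda>j. if j = a then [(C x @ r) ! pa, (C x @ r) ! pb] ! 0 else [(C x @ r) ! pa, (C x @ r) ! pb] ! 1) Q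
            = map (\<lambda>q. (C x @ r) ! phi m s u q) Q"
          using ab unfolding pa_def pb_def by (intro map_cong) auto
        show ?thesis unfolding f'_def rw mq by (rule refl)
      qed
      then show ?thesis by auto
    qed
    have "{pa, pb} \<in> Good 2 \<epsilon> n m C i"
      unfolding Good_def
    proof (intro CollectI conjI exI)
      show "{pa, pb} \<subseteq> {0..<2 * m}" using papb pb2 by auto
      show "card {pa, pb} = 2" using papb by simp
      show "1/2 + \<epsilon>/4 \<le> measure_pmf.prob (pmf_of_set {(x, r). length x = n \<and> length r = m})
          {(x, r). f' (restrict_word (padded C x r) {pa, pb}) = x ! i}"
        using tS unfolding ev Sc_def t_def \<Omega>_def \<theta> by simp
    qed
    then show "\<theta> \<in> A" unfolding A_def using \<theta> \<open>\<theta> \<in> {\<theta>\<in>\<Theta>. t \<le> Sc \<theta> (Q, f)}\<close> pa_def pb_def by auto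
  qed
  have step7: "real (card A) \<le> 6 * \<gamma> * c^2 * real m ^ 2"
  proof -
    define d where "d = b - a"
    have d1: "1 \<le> d" "d \<le> m" unfolding d_def using ab by auto
    define F where "F \<theta> = (phi m (fst \<theta>) (snd \<theta>) a, phi m (fst \<theta>) (snd \<theta>) b - phi m (fst \<theta>) (snd \<theta>) a)" for \<theta>
    have Fgap: "snd (F (s, u)) = d + (b * u div m - a * u div m) \<and> a * u div m \<le> b * u div m" for s u
    proof -
      have "a * u div m \<le> b * u div m" using ab by (intro div_le_mono) simp
      then show ?thesis unfolding F_def phi_def d_def using ab by simp
    qed
    have gapb: "d \<le> snd (F \<theta>) \<and> snd (F \<theta>) \<le> 2 * d" if "\<theta> \<in> \<Theta>" for \<theta>
    proof -
      obtain s u where \<theta>: "\<theta> = (s, u)" by (cases \<theta>)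
      then have uS: "u < S" using that unfolding \<Theta>_def by auto
      have um: "u < m" using uS S4 by linarith
      define P where "P = b * u"
      define Q where "Q = a * u"
      have QP: "Q \<le> P" unfolding P_def Q_def using ab by simp
      have qp: "Q div m \<le> P div m" using QP by (rule div_le_mono)
      have e1: "P = m * (P div m) + P mod m" by simp
      have e2: "Q = m * (Q div m) + Q mod m" by simp
      have l1: "Q mod m < m" using m0 by simp_all
      have du: "d * u = P - Q" unfolding d_def P_def Q_def by (simp add: diff_mult_distrib)
      have mv: "m * (P div m - Q div m) = m * (P div m) - m * (Q div m)" by (simp add: diff_mult_distrib2)
      have "m * (Q div m) \<le> m * (P div m)" using qp by simp
      then have "m * (P div m - Q div m) < d * u + m" using du mv e1 e2 l1 QP by linarith
      also have "d * u + m < d * m + m" using um d1 by simp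
      finally have "m * (P div m - Q div m) < m * (d + 1)" by (simp add: algebra_simps)
      then have "P div m - Q div m < d + 1" using mult_less_cancel1 by blast
      then have "P div m - Q div m \<le> d" by simp
      then show ?thesis using Fgap[of s u] unfolding \<theta> P_def Q_def by linarith
    qed
    have fiber: "real (card {\<theta>\<in>A. F \<theta> = p}) \<le> 2 * real m / real d + 1" for p
    proof -
      obtain k g where p: "p = (k, g)" by (cases p)
      define T where "T = {u. u < S \<and> b*u div m - a*u div m = g - d}"
      have inj: "inj_on snd {\<theta>\<in>A. F \<theta> = p}"
      proof (rule inj_onI)
        fix \<theta>1 \<theta>2 assume h: "\<theta>1 \<in> {\<theta>\<in>A. F \<theta> = p}" "\<theta>2 \<in> {\<theta>\<in>A. F \<theta> = p}" "snd \<theta>1 = snd \<theta>2"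
        obtain s1 u1 where t1: "\<theta>1 = (s1, u1)" by (cases \<theta>1)
        obtain s2 u2 where t2: "\<theta>2 = (s2, u2)" by (cases \<theta>2)
        have "fst (F \<theta>1) = fst (F \<theta>2)" using h by simp
        then show "\<theta>1 = \<theta>2" using h(3) unfolding t1 t2 F_def phi_def by simp
      qed
      have img: "snd ` {\<theta>\<in>A. F \<theta> = p} \<subseteq> T"
      proof
        fix u assume "u \<in> snd ` {\<theta>\<in>A. F \<theta> = p}"
        then obtain s where h: "(s, u) \<in> A" "F (s, u) = p" by force
        have "u < S" using h(1) unfolding A_def \<Theta>_def by auto
        moreover have "g = d + (b * u div m - a * u div m)" using Fgap[of s u] h(2) p by simp
        ultimately show "u \<in> T" unfolding T_def by simp
      qed
      have "card {\<theta>\<in>A. F \<theta> = p} \<le> card T"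
        by (rule card_inj_on_le[OF inj img]) (simp add: T_def)
      then have "real (card {\<theta>\<in>A. F \<theta> = p}) \<le> real (card T)" by simp
      also have "\<dots> \<le> 2 * real m / real (b - a) + 1" unfolding T_def by (rule fiber_card[OF ab(1) m0])
      finally show ?thesis unfolding d_def .
    qed
    have finA: "finite A" unfolding A_def using fin\<Theta> by simp
    have Aeq: "(\<Union>p\<in>F ` A. {\<theta>\<in>A. F \<theta> = p}) = A" by auto
    have "card (\<Union>p\<in>F ` A. {\<theta>\<in>A. F \<theta> = p}) \<le> (\<Sum>p\<in>F ` A. card {\<theta>\<in>A. F \<theta> = p})"
      by (rule card_UN_le) (use finA in simp)
    then have "card A \<le> (\<Sum>p\<in>F ` A. card {\<theta>\<in>A. F \<theta> = p})" unfolding Aeq .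
    then have "real (card A) \<le> (\<Sum>p\<in>F ` A. real (card {\<theta>\<in>A. F \<theta> = p}))"
      unfolding of_nat_sum[symmetric] of_nat_le_iff .
    also have "\<dots> \<le> (\<Sum>p\<in>F ` A. 2 * real m / real d + 1)" by (rule sum_mono) (rule fiber)
    also have "\<dots> = real (card (F ` A)) * (2 * real m / real d + 1)" by simp
    finally have cA: "real (card A) \<le> real (card (F ` A)) * (2 * real m / real d + 1)" .
    have c1: "1 < c" using c by simp
    obtain j0 where j0: "1 \<le> j0" "c ^ (j0 - 1) \<le> real d" "real d < c ^ j0"
      using scale_exists[OF c1, of "real d"] d1 by auto
    define R where "R = nat \<lceil>log c (2 * real m)\<rceil>"
    define J where "J = {j \<in> {j0, j0 + 1}. j \<in> {1..R}}"
    define Aj where "Aj j = {(k, g) \<in> Pj c m j. {k, k + g} \<in> Good 2 \<epsilon> n m C i}" for j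
    have FA: "F ` A \<subseteq> (\<Union>j\<in>J. Aj j)"
    proof
      fix p assume "p \<in> F ` A"
      then obtain \<theta> where \<theta>A: "\<theta> \<in> A" and p: "p = F \<theta>" by blast
      obtain s u where \<theta>: "\<theta> = (s, u)" by (cases \<theta>)
      define k where "k = fst p"
      define g where "g = snd p"
      have "phi m s u a < phi m s u b" using ab(1) by (rule phi_strict)
      then have kg: "{k, k + g} = {phi m s u a, phi m s u b}" unfolding k_def g_def p F_def \<theta> by auto
      have good: "{k, k + g} \<in> Good 2 \<epsilon> n m C i" using \<theta>A unfolding A_def kg \<theta> by simp
      then have kg2: "k + g < 2 * m" unfolding Good_def by auto
      have gb: "d \<le> g" "g \<le> 2 * d" using gapb \<theta>A unfolding A_def g_def p by auto
      then have "1 \<le> real g" using d1 by simp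
      then obtain jg where jg: "1 \<le> jg" "c ^ (jg - 1) \<le> real g" "real g < c ^ jg"
        using scale_exists[OF c1, of "real g"] by auto
      have "j0 \<le> jg \<and> jg \<le> j0 + 1"
        by (rule scale_compare[OF c j0(2,3,1) jg(2,3)]) (use gb in simp_all)
      moreover have "jg \<le> R" unfolding R_def
        by (rule scale_range[OF c1 jg(1)]) (use jg(2) kg2 in linarith)
      ultimately have "jg \<in> J" unfolding J_def using jg(1) by auto
      moreover have "p \<in> Aj jg" unfolding Aj_def Pj_def using kg2 jg good
        by (cases p) (simp add: k_def g_def)
      ultimately show "p \<in> (\<Union>j\<in>J. Aj j)" by blast
    qed
    have finAj: "finite (Aj j)" for j
    proof (rule finite_subset)
      show "Aj j \<subseteq> {..<2*m} \<times> {..<2*m}" unfolding Aj_def Good_def by auto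
    qed simp
    have finJ: "finite J" unfolding J_def by simp
    have cardJ: "card J \<le> 2"
    proof -
      have "J \<subseteq> {j0, j0 + 1}" unfolding J_def by auto
      then have "card J \<le> card {j0, j0 + 1}" by (intro card_mono) auto
      then show ?thesis by (simp add: card_insert_if)
    qed
    have "card (F ` A) \<le> card (\<Union>j\<in>J. Aj j)"
      by (rule card_mono[OF _ FA]) (use finJ finAj in simp)
    also have "\<dots> \<le> (\<Sum>j\<in>J. card (Aj j))" by (rule card_UN_le[OF finJ])
    finally have "real (card (F ` A)) \<le> (\<Sum>j\<in>J. real (card (Aj j)))"
      unfolding of_nat_sum[symmetric] of_nat_le_iff .
    also have "\<dots> \<le> (\<Sum>j\<in>J. \<gamma> * real m * c ^ (j0 + 1))"
    proof (rule sum_mono)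
      fix j assume jJ: "j \<in> J"
      have "real (card (Aj j)) = real (Pj_good_count c m j (Good 2 \<epsilon> n m C i))"
        unfolding Aj_def Pj_good_count_def ..
      also have "\<dots> < \<gamma> * real m * c ^ j" using small jJ unfolding J_def R_def by blast
      also have "\<dots> \<le> \<gamma> * real m * c ^ (j0 + 1)"
      proof (rule mult_left_mono)
        show "c ^ j \<le> c ^ (j0 + 1)" using jJ c unfolding J_def by (intro power_increasing) auto
        show "0 \<le> \<gamma> * real m" unfolding \<gamma> using \<epsilon> c by simp
      qed
      finally show "real (card (Aj j)) \<le> \<gamma> * real m * c ^ (j0 + 1)" by simp
    qed
    also have "\<dots> = real (card J) * (\<gamma> * real m * c ^ (j0 + 1))" by simp
    also have "\<dots> \<le> 2 * (\<gamma> * real m * c ^ (j0 + 1))"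
      by (rule mult_right_mono) (use cardJ \<epsilon> c in \<open>simp_all add: \<gamma>\<close>)
    also have "c ^ (j0 + 1) = c^2 * c ^ (j0 - 1)" using j0(1)
      by (cases j0) (simp_all add: power2_eq_square)
    also have "2 * (\<gamma> * real m * (c^2 * c ^ (j0 - 1))) \<le> 2 * (\<gamma> * real m * (c^2 * real d))"
      by (intro mult_left_mono) (use j0(2) \<epsilon> c in \<open>simp_all add: \<gamma>\<close>)
    finally have cFA: "real (card (F ` A)) \<le> 2 * (\<gamma> * real m * (c^2 * real d))" .
    have pos: "0 \<le> 2 * real m / real d + 1" by simp
    have "real (card A) \<le> 2 * (\<gamma> * real m * (c^2 * real d)) * (2 * real m / real d + 1)"
      using cA mult_right_mono[OF cFA pos] by linarith
    also have "\<dots> = 2 * \<gamma> * c^2 * real m * (2 * real m + real d)"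
      using d1 by (simp add: field_simps)
    also have "\<dots> \<le> 2 * \<gamma> * c^2 * real m * (3 * real m)"
      by (rule mult_left_mono) (use d1 \<epsilon> c in \<open>simp_all add: \<gamma>\<close>)
    also have "\<dots> = 6 * \<gamma> * c^2 * real m ^ 2" by (simp add: power2_eq_square)
    finally show ?thesis .
  qed
  have "real (H (Q, f)) \<le> real (card A)"
    unfolding H_def using step6 A_def fin\<Theta> by (intro of_nat_mono card_mono) auto
  then have "real (card \<Theta>) * (\<epsilon> / 2) < 6 * \<gamma> * c^2 * real m ^ 2" using Hbig step7 by linarith
  moreover have "(\<delta> * real m / 8)^2 \<le> real (card \<Theta>)"
    unfolding card\<Theta> power2_eq_square of_nat_mult using S_lo \<delta> m0 by (intro mult_mono) auto
  moreover have "6 * \<gamma> * c^2 * real m ^ 2 = (6/1000) * \<epsilon> * (\<delta> * real m)^2"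
    unfolding \<gamma> using c by (simp add: power2_eq_square)
  ultimately have "(\<delta> * real m / 8)^2 * (\<epsilon> / 2) < (6/1000) * \<epsilon> * (\<delta> * real m)^2"
    using \<epsilon> mult_right_mono[of "(\<delta> * real m / 8)^2" "real (card \<Theta>)" "\<epsilon> / 2"] by linarith
  moreover have "(\<delta> * real m / 8)^2 * (\<epsilon> / 2) = (\<delta> * real m)^2 * \<epsilon> / 128"
    by (simp add: power_divide)
  moreover have "0 < (\<delta> * real m)^2 * \<epsilon>" using \<delta> \<epsilon> m0 by simp
  moreover have "6/1000 * \<epsilon> * (\<delta> * real m)^2 = (6/1000) * ((\<delta> * real m)^2 * \<epsilon>)" by simp
  ultimately show False by linarith
qed


lemma ln2_gt: "1/2 < ln (2::real)"
proof -
  have "exp (1/2::real) * exp (1/2) = exp 1" by (simp add: exp_add[symmetric])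
  also have "\<dots> \<le> 3" by (rule exp_le)
  finally have "exp (1/2::real) * exp (1/2) < 2 * 2" by simp
  then have "exp (1/2::real) < 2"
  proof (rule contrapos_pp)
    assume "\<not> exp (1/2::real) < 2"
    then have "2 * 2 \<le> exp (1/2::real) * exp (1/2)" by (intro mult_mono) auto
    then show "\<not> exp (1/2::real) * exp (1/2) < 2 * 2" by linarith
  qed
  then have "ln (exp (1/2::real)) < ln 2" by (subst ln_less_cancel_iff) auto
  then show ?thesis by simp
qed

theorem mainTheorem15:
  fixes \<delta> \<epsilon> :: real
  assumes "0 < \<delta>" "\<delta> \<le> 1" "0 < \<epsilon>" "\<epsilon> \<le> 1/2"
  defines "c \<equiv> 4 * ln (1 / \<epsilon>)"
  shows "\<exists>\<gamma>::real. 0 < \<gamma> \<and> \<gamma> \<le> 1 \<and>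
    (\<exists>M::nat. \<forall>n m :: nat. \<forall>C :: bool list \<Rightarrow> bool list. \<forall>Dec :: decoder.
       m \<ge> M \<longrightarrow> insdel_LDC_nonadaptive 2 \<delta> \<epsilon> n m C Dec \<longrightarrow>
       (\<forall>i < n. \<exists>j \<in> {1..nat \<lceil>log c (2 * real m)\<rceil>}.
          real (Pj_good_count c m j (Good 2 \<epsilon> n m C i)) \<ge> \<gamma> * real m * c ^ j))"
proof -
  have "2 \<le> 1 / \<epsilon>" using assms by (simp add: field_simps)
  then have "ln 2 \<le> ln (1 / \<epsilon>)" using assms by (subst ln_le_cancel_iff) auto
  then have c2: "2 < c" unfolding c_def using ln2_gt by linarith
  define \<gamma> where "\<gamma> = \<epsilon> * \<delta>^2 / (1000 * c^2)"
  have g0: "0 < \<gamma>" unfolding \<gamma>_def using assms c2 by simp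
  have "\<epsilon> * \<delta>^2 \<le> 1 * 1" using assms by (intro mult_mono) (auto simp: power_le_one)
  moreover have "1 \<le> 1000 * c^2"
  proof -
    have "1 \<le> c^2" using c2 by (intro one_le_power) simp
    then show ?thesis by linarith
  qed
  ultimately have g1: "\<gamma> \<le> 1" unfolding \<gamma>_def by (simp add: divide_le_eq)
  define M where "M = nat \<lceil>16 / \<delta>\<rceil>"
  have Mbig: "16 \<le> \<delta> * real m" if "M \<le> m" for m
  proof -
    have "16 / \<delta> \<le> real m" using that unfolding M_def by linarith
    then show ?thesis using assms by (simp add: field_simps)
  qed
  show ?thesis
  proof (intro exI conjI allI impI)
    show "0 < \<gamma>" "\<gamma> \<le> 1" by (fact g0, fact g1)
    fix n m :: nat and C :: "bool list \<Rightarrow> bool list" and Dec :: decoder and i :: nat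
    assume m: "M \<le> m" and L: "insdel_LDC_nonadaptive 2 \<delta> \<epsilon> n m C Dec" and i: "i < n"
    show "\<exists>j \<in> {1..nat \<lceil>log c (2 * real m)\<rceil>}.
          real (Pj_good_count c m j (Good 2 \<epsilon> n m C i)) \<ge> \<gamma> * real m * c ^ j"
    proof (rule ccontr)
      assume "\<not> ?thesis"
      then have small: "\<forall>j\<in>{1..nat \<lceil>log c (2 * real m)\<rceil>}.
        real (Pj_good_count c m j (Good 2 \<epsilon> n m C i)) < \<gamma> * real m * c ^ j" by auto
      show False
        by (rule core[OF assms(1-4) c2 \<gamma>_def Mbig[OF m] L i small])
    qed
  qed
qed


end
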